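(* Let $\mathbf{W}_0,\mathbf{W}^\star\in\mathbb{R}^{m\times n}$ with $\mathbf{W}^\star\neq\mathbf{W}_0$, let $r\ge1$, and let $L(\mathbf{W})=\frac12\|\mathbf{W}-\mathbf{W}^\star\|_F^2$ (which satisfies the PL inequality on $\mathbb{R}^{m\times n}$ with $\beta=1$). Then $F_{\mathrm{LoRA}}(\mathbf{A},\mathbf{B})=\frac12\|\mathbf{W}_0+\mathbf{A}\mathbf{B}-\mathbf{W}^\star\|_F^2$ does not satisfy the PL inequality on $\mathbb{R}^{m\times r}\times\mathbb{R}^{r\times n}$, i.e. there is no $\beta>0$ with $\frac12\|\nabla F_{\mathrm{LoRA}}(\mathbf{A},\mathbf{B})\|_F^2\ge\beta(F_{\mathrm{LoRA}}(\mathbf{A},\mathbf{B})-F^\star)$ for all $(\mathbf{A},\mathbf{B})$, where $F^\star=\inf F_{\mathrm{LoRA}}$. *)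

theory Defs
  imports "HOL-Analysis.Analysis"
begin

definition PL_ineq :: "('a::real_inner \<Rightarrow> real) \<Rightarrow> real \<Rightarrow> bool" where
  "PL_ineq f \<beta> \<longleftrightarrow>
     (\<forall>x D. (GDERIV f x :> D) \<longrightarrow> (1/2) * (norm D)^2 \<ge> \<beta> * (f x - (INF y. f y)))"

text \<open>LoRA objective; the norm on real^'n^'m is the Frobenius norm.\<close>
definition F_LoRA :: "real^'n^'m \<Rightarrow> real^'n^'m \<Rightarrow> ((real^'r^'m) \<times> (real^'n^'r)) \<Rightarrow> real" where
  "F_LoRA W0 Wstar AB = (1/2) * (norm (W0 + fst AB ** snd AB - Wstar))^2"

end

theory Submission imports Defs begin
lemma bil: "bilinear ((**) :: real^'r^'m \<Rightarrow> real^'n^'r \<Rightarrow> real^'n^'m)"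
  unfolding bilinear_def linear_iff
  by (auto simp: vec_eq_iff matrix_matrix_mult_def sum.distrib algebra_simps sum_distrib_left)

lemma bbil: "bounded_bilinear ((**) :: real^'r^'m \<Rightarrow> real^'n^'r \<Rightarrow> real^'n^'m)"
  using bil bilinear_conv_bounded_bilinear by blast

lemma grad0: "GDERIV (F_LoRA W0 Wstar :: (real^'r^'m) \<times> (real^'n^'r) \<Rightarrow> real) (0,0) :> 0"
proof -
  have d: "((\<lambda>x::(real^'r^'m) \<times> (real^'n^'r). fst x ** snd x) has_derivative (\<lambda>h. fst (0::(real^'r^'m) \<times> (real^'n^'r)) ** snd h + fst h ** snd (0::(real^'r^'m) \<times> (real^'n^'r)))) (at 0)"
    by (rule bounded_bilinear.FDERIV[OF bbil has_derivative_fst[OF has_derivative_ident] has_derivative_snd[OF has_derivative_ident]])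
  hence d2: "((\<lambda>x::(real^'r^'m) \<times> (real^'n^'r). fst x ** snd x) has_derivative (\<lambda>h. 0)) (at 0)"
    by (simp add: bounded_bilinear.zero_left[OF bbil] bounded_bilinear.zero_right[OF bbil])
  have e: "F_LoRA W0 Wstar = (\<lambda>x::(real^'r^'m) \<times> (real^'n^'r). (1/2) * inner (W0 + fst x ** snd x - Wstar) (W0 + fst x ** snd x - Wstar))"
    by (auto simp: F_LoRA_def fun_eq_iff power2_norm_eq_inner)
  show ?thesis unfolding e zero_prod_def[symmetric] gderiv_def
    apply (rule has_derivative_eq_rhs)
     apply (rule derivative_eq_intros d2 | simp)+
    done
qed

lemma better:
  fixes W0 Wstar :: "real^'n^'m"
  assumes "Wstar \<noteq> W0"
  shows "\<exists>AB. (F_LoRA W0 Wstar :: (real^'r^'m) \<times> (real^'n^'r) \<Rightarrow> real) AB < F_LoRA W0 Wstar (0,0)"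
proof -
  define D where "D = Wstar - W0"
  have "D \<noteq> 0" using assms by (simp add: D_def)
  then obtain i0 j0 where ij: "D $ i0 $ j0 \<noteq> 0" by (metis vec_eq_iff zero_index)
  obtain k0 :: 'r where True by simp
  define t where "t = D $ i0 $ j0"
  define A :: "real^'r^'m" where "A = (\<chi> i k. if i = i0 \<and> k = k0 then 1 else 0)"
  define B :: "real^'n^'r" where "B = (\<chi> k j. if k = k0 \<and> j = j0 then t else 0)"
  define E :: "real^'n^'m" where "E = (\<chi> i j. if i = i0 \<and> j = j0 then 1 else 0)"
  have AB: "A ** B = t *\<^sub>R E"
    by (simp add: vec_eq_iff matrix_matrix_mult_def A_def B_def E_def if_distrib[of "\<lambda>x. x * _"] sum.delta cong: if_cong)
  have iXE: "inner X E = X$i0$j0" for X :: "real^'n^'m"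
  proof -
    have "inner (X$i) (E$i) = (if i = i0 then X$i0$j0 else 0)" for i
    proof (cases "i = i0")
      case True
      have "inner (X$i) (E$i) = (\<Sum>j\<in>UNIV. if j = j0 then X$i0$j else 0)"
        unfolding inner_vec_def using True by (intro sum.cong) (auto simp: E_def)
      then show ?thesis using True by simp
    next
      case False
      then show ?thesis by (simp add: inner_vec_def E_def)
    qed
    then show ?thesis by (simp add: inner_vec_def[of X E])
  qed
  have iDE: "inner D E = t" by (simp add: iXE t_def)
  have iEE: "inner E E = 1" unfolding iXE[of E] by (simp add: E_def)
  have "W0 + A ** B - Wstar = t *\<^sub>R E - D" by (simp add: AB D_def)
  hence "(norm (W0 + A ** B - Wstar))^2 = inner D D - t^2"
    by (simp only: power2_norm_eq_inner) (simp add: inner_diff_left inner_diff_right iDE iEE inner_commute[of E D] algebra_simps power2_eq_square)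
  moreover have "(norm (W0 + (0::real^'r^'m) ** (0::real^'n^'r) - Wstar))^2 = inner D D"
    by (simp add: power2_norm_eq_inner D_def inner_diff_left inner_diff_right inner_commute bounded_bilinear.zero_left[OF bbil])
  moreover have "t^2 > 0" using ij t_def by simp
  ultimately show ?thesis unfolding F_LoRA_def by (intro exI[of _ "(A,B)"]) simp
qed

theorem proposition3:
  fixes W0 Wstar :: "real^'n^'m"
  assumes "Wstar \<noteq> W0"
  shows "\<not> (\<exists>\<beta>>0. PL_ineq (F_LoRA W0 Wstar :: (real^'r^'m) \<times> (real^'n^'r) \<Rightarrow> real) \<beta>)"
proof
  assume "\<exists>\<beta>>0. PL_ineq (F_LoRA W0 Wstar :: (real^'r^'m) \<times> (real^'n^'r) \<Rightarrow> real) \<beta>"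
  then obtain \<beta> where b: "\<beta> > 0" and pl: "PL_ineq (F_LoRA W0 Wstar :: (real^'r^'m) \<times> (real^'n^'r) \<Rightarrow> real) \<beta>" by blast
  let ?F = "F_LoRA W0 Wstar :: (real^'r^'m) \<times> (real^'n^'r) \<Rightarrow> real"
  obtain AB where lt: "?F AB < ?F (0,0)" using better[OF assms] by blast
  have bdd: "bdd_below (range ?F)" by (rule bdd_belowI[of _ 0]) (auto simp: F_LoRA_def)
  have "(INF y. ?F y) \<le> ?F AB" by (rule cINF_lower[OF bdd]) simp
  hence pos: "?F (0,0) - (INF y. ?F y) > 0" using lt by simp
  have "(1/2) * (norm (0::(real^'r^'m) \<times> (real^'n^'r)))^2 \<ge> \<beta> * (?F (0,0) - (INF y. ?F y))"
    using pl grad0 unfolding PL_ineq_def by blast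
  moreover have "\<beta> * (?F (0,0) - (INF y. ?F y)) > 0" by (rule mult_pos_pos[OF b pos])
  ultimately show False by simp
qed
end
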